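(* Let $p$ be a prime, $k\ge1$, $q=p^k$. Every integer of the form $$D=AB^{q-1},$$ where $A,B\in\mathbb Z$ satisfy $\gcd(A,q-1)=1$ and $B\equiv A\pmod q$, is an integer group determinant of $GA(1,q)$.
   Context: For a finite group $G=\{g_1,\dots,g_n\}$ and an element $\sum_{g\in G}a_g g$ of the group ring $\mathbb Z[G]$ (all $a_g\in\mathbb Z$), the group determinant is $D\left(\sum_{g\in G}a_g g\right)=\det\left(a_{g_ig_j^{-1}}\right)_{i,j=1}^n$. An integer group determinant of $G$ is any integer of this form. The general affine group of degree one over $\mathbb F_q$ is $GA(1,q)=\left\{\begin{pmatrix} a & b\\ 0 & 1\end{pmatrix}: a\in\mathbb F_q^*,\ b\in\mathbb F_q\right\}$ under matrix multiplication. *)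

theory Defs
  imports "HOL-Combinatorics.Permutations" "HOL-Number_Theory.Cong"
begin

text \<open>GA(1,q) over a finite field 'a: the matrix [[a,b],[0,1]] is represented
by the pair (a,b) with a nonzero.\<close>

definition GA1 :: "('a::field \<times> 'a) set" where
  "GA1 = {(a, b). a \<noteq> 0}"

text \<open>Matrix product [[a,b],[0,1]] [[c,d],[0,1]] = [[ac, ad+b],[0,1]].\<close>
definition ga_mult :: "'a::field \<times> 'a \<Rightarrow> 'a \<times> 'a \<Rightarrow> 'a \<times> 'a" where
  "ga_mult x y = (fst x * fst y, fst x * snd y + snd x)"

definition ga_inv :: "'a::field \<times> 'a \<Rightarrow> 'a \<times> 'a" where
  "ga_inv x = (inverse (fst x), - snd x / fst x)"

text \<open>Group determinant det(a_{g h^{-1}})_{g,h \<in> G}, written via the Leibniz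
formula over permutations of the (finite) index set G; this is independent of
the chosen enumeration of G.\<close>
definition group_det ::
  "'g set \<Rightarrow> ('g \<Rightarrow> 'g \<Rightarrow> 'g) \<Rightarrow> ('g \<Rightarrow> 'g) \<Rightarrow> ('g \<Rightarrow> int) \<Rightarrow> int" where
  "group_det G gm gi a =
     (\<Sum>\<sigma> | \<sigma> permutes G. sign \<sigma> * (\<Prod>g\<in>G. a (gm g (gi (\<sigma> g)))))"

end

theory Submission
  imports Defs "HOL-Analysis.Determinants" "HOL-Combinatorics.Cycles" "HOL-Number_Theory.Residues"
begin


definition tyring :: "'a::field ring" where
  "tyring = \<lparr>carrier = UNIV, monoid.mult = (\<lambda>x y. x * y), one = 1, ring.zero = 0, add = (\<lambda>x y. x + y)\<rparr>"

lemma tyring_field: "field (tyring :: 'a::field ring)"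
proof -
  have "\<exists>y. x + y = 0" for x :: 'a
    using add.right_inverse by blast
  moreover have "x \<noteq> 0 \<Longrightarrow> \<exists>y. x * y = 1" for x :: 'a
    by (rule exI[of _ "inverse x"]) auto
  ultimately show ?thesis
    unfolding tyring_def using add.right_inverse
    by unfold_locales (auto simp:algebra_simps Units_def)
qed

lemma gen_exists:
  "\<exists>g::'a::{field,finite}. g \<noteq> 0 \<and> (\<forall>x. x \<noteq> 0 \<longrightarrow> (\<exists>i::nat. x = g ^ i))"
proof -
  interpret F: field "tyring :: 'a ring" by (rule tyring_field)
  have pw: "x [^]\<^bsub>tyring :: 'a ring\<^esub> (i::nat) = x ^ i" for x :: 'a and i
    by (induction i) (simp_all add: tyring_def mult.commute)
  have "\<exists>a\<in>carrier (Multiplicative_Group.mult_of (tyring :: 'a ring)). carrier (Multiplicative_Group.mult_of (tyring :: 'a ring)) = {a [^]\<^bsub>tyring :: 'a ring\<^esub> i |i::nat. i \<in> UNIV}"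
    by (rule F.finite_field_mult_group_has_gen) (simp add: tyring_def)
  then obtain a where a: "a \<in> carrier (Multiplicative_Group.mult_of (tyring :: 'a ring))"
    and eq: "carrier (Multiplicative_Group.mult_of (tyring :: 'a ring)) = {a [^]\<^bsub>tyring :: 'a ring\<^esub> i |i::nat. i \<in> UNIV}" by blast
  have c: "carrier (Multiplicative_Group.mult_of (tyring :: 'a ring)) = UNIV - {0}"
    by (simp add: tyring_def)
  show ?thesis using a eq unfolding c pw by (intro exI[of _ a]) blast
qed


lemma det_reindex:
  fixes f :: "'n::finite \<Rightarrow> 'g" and m :: "'g \<Rightarrow> 'g \<Rightarrow> 'r::comm_ring_1"
  assumes f: "bij_betw f UNIV S"
  shows "det (\<chi> i j. m (f i) (f j)) = (\<Sum>\<sigma> | \<sigma> permutes S. of_int (sign \<sigma>) * (\<Prod>g\<in>S. m g (\<sigma> g)))"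
proof -
  let ?g = "inv_into UNIV f"
  have g: "bij_betw ?g S UNIV" using f bij_betw_inv_into by blast
  have injf: "inj f" using f by (simp add: bij_betw_def)
  show ?thesis unfolding det_def
  proof (rule sum.reindex_bij_witness[where i="map_permutation S ?g" and j="map_permutation UNIV f"])
    fix p assume "p \<in> {p. p permutes (UNIV::'n set)}"
    then have p: "p permutes UNIV" by simp
    show "map_permutation S ?g (map_permutation UNIV f p) = p"
      by (rule map_permutation_compose_inv[OF f p]) (use injf in auto)
    show "map_permutation UNIV f p \<in> {\<sigma>. \<sigma> permutes S}" using map_permutation_permutes[OF f p] by simp
    have s: "sign (map_permutation UNIV f p) = sign p" using sign_map_permutation[of f UNIV p] injf p by auto
    have "(\<Prod>g\<in>S. m g (map_permutation UNIV f p g)) = (\<Prod>i\<in>UNIV. m (f i) (map_permutation UNIV f p (f i)))"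
      using prod.reindex_bij_betw[OF f, of "\<lambda>g. m g (map_permutation UNIV f p g)"] by simp
    also have "\<dots> = (\<Prod>i\<in>UNIV. m (f i) (f (p i)))"
      by (intro prod.cong refl) (simp add: map_permutation_apply[OF injf])
    finally show "of_int (sign (map_permutation UNIV f p)) * (\<Prod>g\<in>S. m g (map_permutation UNIV f p g)) = of_int (sign p) * (\<Prod>i\<in>UNIV. (\<chi> i j. m (f i) (f j)) $ i $ p i)"
      by (simp add: s)
  next
    fix \<sigma> assume "\<sigma> \<in> {\<sigma>. \<sigma> permutes S}"
    then have s: "\<sigma> permutes S" by simp
    show "map_permutation UNIV f (map_permutation S ?g \<sigma>) = \<sigma>"
      by (rule map_permutation_compose_inv[OF g s]) (use f in \<open>auto simp: bij_betw_inv_into_right\<close>)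
    show "map_permutation S ?g \<sigma> \<in> {p. p permutes UNIV}" using map_permutation_permutes[OF g s] by simp
  qed
qed

lemma det_rows_diag:
  fixes A :: "'r::comm_ring_1^'n::finite^'n"
  assumes d: "\<And>i j. i \<notin> R \<Longrightarrow> A$i$j = (if j = i then d i else 0)"
  shows "det A = (\<Prod>i\<in>-R. d i) * (\<Sum>\<sigma> | \<sigma> permutes R. of_int (sign \<sigma>) * (\<Prod>i\<in>R. A$i$\<sigma> i))"
proof -
  let ?t = "\<lambda>p. of_int (sign p) * (\<Prod>i\<in>UNIV. A$i$p i)"
  have sub: "{p. p permutes R} \<subseteq> {p. p permutes (UNIV::'n set)}"
    using permutes_subset by blast
  have z: "\<forall>p\<in>{p. p permutes UNIV} - {p. p permutes R}. ?t p = 0"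
  proof
    fix p assume p: "p \<in> {p. p permutes (UNIV::'n set)} - {p. p permutes R}"
    have "\<exists>i. i \<notin> R \<and> p i \<noteq> i"
    proof (rule ccontr)
      assume "\<not> ?thesis"
      then have "\<forall>i. i \<notin> R \<longrightarrow> p i = i" by blast
      with p show False by (auto simp: permutes_def)
    qed
    then obtain i where i: "i \<notin> R" "p i \<noteq> i" by blast
    have "A$i$p i = 0" using d[OF i(1)] i(2) by simp
    then have "(\<Prod>i\<in>UNIV. A$i$p i) = 0" by (intro prod_zero) auto
    then show "?t p = 0" by simp
  qed
  have fin: "finite {p. p permutes (UNIV::'n set)}" by (simp add: finite_permutations)
  have "det A = (\<Sum>p\<in>{p. p permutes R}. ?t p)"
    unfolding det_def using sum.mono_neutral_right[OF fin sub z] .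
  also have "\<dots> = (\<Sum>p\<in>{p. p permutes R}. (\<Prod>i\<in>-R. d i) * (of_int (sign p) * (\<Prod>i\<in>R. A$i$p i)))"
  proof (rule sum.cong[OF refl])
    fix p assume "p \<in> {p. p permutes R}"
    then have p: "p permutes R" by simp
    have "(\<Prod>i\<in>UNIV. A$i$p i) = (\<Prod>i\<in>R. A$i$p i) * (\<Prod>i\<in>-R. A$i$p i)"
      using prod.union_disjoint[of R "-R" "\<lambda>i. A$i$p i"] by (simp add: Compl_partition)
    also have "(\<Prod>i\<in>-R. A$i$p i) = (\<Prod>i\<in>-R. d i)"
      by (intro prod.cong refl) (simp add: d permutes_not_in[OF p])
    finally show "?t p = (\<Prod>i\<in>-R. d i) * (of_int (sign p) * (\<Prod>i\<in>R. A$i$p i))"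
      by (simp add: algebra_simps)
  qed
  finally show ?thesis by (simp add: sum_distrib_left)
qed

lemma det_rows_diag_reindex:
  fixes A :: "'r::comm_ring_1^'n::finite^'n" and rep :: "'b::finite \<Rightarrow> 'n"
  assumes d: "\<And>i j. i \<notin> R \<Longrightarrow> A$i$j = (if j = i then d i else 0)"
    and rep: "bij_betw rep UNIV R"
  shows "det A = (\<Prod>i\<in>-R. d i) * det (\<chi> s s'. A $ rep s $ rep s')"
  using det_rows_diag[OF d] det_reindex[OF rep, of "\<lambda>i j. A$i$j"] by simp

lemma sum_perm_delta:
  assumes "finite T"
  shows "(\<Sum>\<sigma> | \<sigma> permutes T. of_int (sign \<sigma>) * (\<Prod>i\<in>T. (if \<sigma> i = i then 1 else 0))) = (1::'r::comm_ring_1)"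
proof -
  have fin: "finite {\<sigma>. \<sigma> permutes T}" using assms by (simp add: finite_permutations)
  have sub: "{id} \<subseteq> {\<sigma>. \<sigma> permutes T}" by (simp add: permutes_id)
  have z: "\<forall>\<sigma>\<in>{\<sigma>. \<sigma> permutes T} - {id}. of_int (sign \<sigma>) * (\<Prod>i\<in>T. (if \<sigma> i = i then 1 else (0::'r))) = 0"
  proof
    fix \<sigma> assume s: "\<sigma> \<in> {\<sigma>. \<sigma> permutes T} - {id}"
    then obtain i where "\<sigma> i \<noteq> i" by (auto simp: fun_eq_iff)
    moreover have "i \<in> T" using s \<open>\<sigma> i \<noteq> i\<close> by (auto simp: permutes_def)
    ultimately show "of_int (sign \<sigma>) * (\<Prod>i\<in>T. (if \<sigma> i = i then 1 else (0::'r))) = 0"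
    proof -
      have "(\<Prod>i\<in>T. (if \<sigma> i = i then 1 else (0::'r))) = 0"
        using assms \<open>\<sigma> i \<noteq> i\<close> \<open>i \<in> T\<close> by (intro prod_zero) auto
      then show ?thesis by simp
    qed
  qed
  have "(\<Sum>\<sigma> | \<sigma> permutes T. of_int (sign \<sigma>) * (\<Prod>i\<in>T. (if \<sigma> i = i then 1 else 0))) =
        (\<Sum>\<sigma>\<in>{id}. of_int (sign \<sigma>) * (\<Prod>i\<in>T. (if \<sigma> i = i then 1 else (0::'r))))"
    using sum.mono_neutral_right[OF fin sub z] by simp
  also have "\<dots> = 1" by simp
  finally show ?thesis .
qed

lemma det_unit_like:
  fixes A :: "'r::comm_ring_1^'n::finite^'n"
  assumes "\<And>i j. i \<in> R \<Longrightarrow> A$i$j = (if j = i then 1 else 0)"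
    and "\<And>i j. i \<notin> R \<Longrightarrow> j \<notin> R \<Longrightarrow> A$i$j = (if j = i then 1 else 0)"
  shows "det A = 1"
proof -
  have "det A = (\<Prod>i\<in>-(-R). (1::'r)) * (\<Sum>\<sigma> | \<sigma> permutes (-R). of_int (sign \<sigma>) * (\<Prod>i\<in>-R. A$i$\<sigma> i))"
    by (rule det_rows_diag) (use assms(1) in auto)
  also have "(\<Sum>\<sigma> | \<sigma> permutes (-R). of_int (sign \<sigma>) * (\<Prod>i\<in>-R. A$i$\<sigma> i)) =
     (\<Sum>\<sigma> | \<sigma> permutes (-R). of_int (sign \<sigma>) * (\<Prod>i\<in>-R. (if \<sigma> i = i then 1 else 0)))"
  proof (intro sum.cong refl)
    fix \<sigma> assume "\<sigma> \<in> {\<sigma>. \<sigma> permutes (-R)}"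
    then have s: "\<sigma> permutes (-R)" by simp
    show "of_int (sign \<sigma>) * (\<Prod>i\<in>-R. A$i$\<sigma> i) = of_int (sign \<sigma>) * (\<Prod>i\<in>-R. (if \<sigma> i = i then 1 else 0))"
      by (intro arg_cong[where f="\<lambda>x. _ * x"] prod.cong refl)
         (use s assms(2) permutes_in_image[OF s] in \<open>auto simp: eq_commute\<close>)
  qed
  also have "\<dots> = 1" by (rule sum_perm_delta) simp
  finally show ?thesis by simp
qed


lemma mult_Q_entry:
  fixes X :: "'r::comm_ring_1^'n::finite^'n"
  assumes rk: "\<And>k. k \<notin> R \<Longrightarrow> r k \<noteq> k"
  shows "(X ** (\<chi> k j. (if j = k then 1 else 0) + (if k \<notin> R \<and> j = r k then 1 else 0))) $ i $ j
     = X$i$j + (\<Sum>k\<in>{k. k \<notin> R \<and> r k = j}. X$i$k)"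
proof -
  have "(X ** (\<chi> k j. (if j = k then 1 else 0) + (if k \<notin> R \<and> j = r k then 1 else 0))) $ i $ j
      = (\<Sum>k\<in>UNIV. X$i$k * ((if j = k then 1 else 0) + (if k \<notin> R \<and> j = r k then 1 else 0)))"
    by (simp add: matrix_matrix_mult_def)
  also have "\<dots> = (\<Sum>k\<in>UNIV. (if j = k then X$i$k else 0) + (if k \<notin> R \<and> r k = j then X$i$k else 0))"
    by (intro sum.cong refl) (use rk in auto)
  also have "\<dots> = (\<Sum>k\<in>UNIV. (if j = k then X$i$k else 0)) + (\<Sum>k\<in>UNIV. (if k \<notin> R \<and> r k = j then X$i$k else 0))"
    by (simp add: sum.distrib)
  also have "\<dots> = X$i$j + (\<Sum>k\<in>{k. k \<notin> R \<and> r k = j}. X$i$k)"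
    by (simp add: sum.inter_filter[symmetric])
  finally show ?thesis .
qed

lemma det_block_rank:
  fixes \<pi> :: "'n::finite \<Rightarrow> 'b::finite" and W :: "'b \<Rightarrow> 'n \<Rightarrow> 'r::comm_ring_1" and e :: 'r
  assumes surj: "surj \<pi>"
  shows "det (\<chi> i j. (if i = j then e else 0) + W (\<pi> i) j) =
     e ^ (CARD('n) - CARD('b)) * det (\<chi> s s'. (if s = s' then e else 0) + (\<Sum>j\<in>{j. \<pi> j = s'}. W s j))"
proof -
  define rep where "rep s = (SOME i. \<pi> i = s)" for s
  have pirep: "\<pi> (rep s) = s" for s
    unfolding rep_def using surj by (metis (mono_tags) someI surj_def)
  define R where "R = range rep"
  define r where "r i = rep (\<pi> i)" for i
  have injrep: "inj rep" by (metis injI pirep)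
  have bij: "bij_betw rep UNIV R" unfolding R_def using injrep by (simp add: bij_betw_def)
  have inR: "i \<in> R \<longleftrightarrow> r i = i" for i
    unfolding R_def r_def by (metis pirep rangeE rangeI)
  have rR: "r i \<in> R" for i unfolding R_def r_def by simp
  have pir: "\<pi> (r i) = \<pi> i" for i unfolding r_def by (simp add: pirep)
  define K where "K = (\<chi> i j. (if i = j then e else 0) + W (\<pi> i) j)"
  define P :: "'r^'n^'n" where "P = (\<chi> i k. (if k = i then 1 else 0) - (if i \<notin> R \<and> k = r i then 1 else 0))"
  define Q :: "'r^'n^'n" where "Q = (\<chi> k j. (if j = k then 1 else 0) + (if k \<notin> R \<and> j = r k then 1 else 0))"
  have detP: "det P = 1"
    by (rule det_unit_like[where R=R]) (use rR in \<open>auto simp: P_def\<close>)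
  have detQ: "det Q = 1"
    by (rule det_unit_like[where R=R]) (use rR in \<open>auto simp: Q_def\<close>)
  have PK: "(P ** K) $ i $ j = K$i$j - (if i \<notin> R then K$(r i)$j else 0)" for i j
  proof -
    have "(P ** K) $ i $ j = (\<Sum>k\<in>UNIV. ((if k = i then 1 else 0) - (if i \<notin> R \<and> k = r i then 1 else 0)) * K$k$j)"
      by (simp add: matrix_matrix_mult_def P_def)
    also have "\<dots> = (\<Sum>k\<in>UNIV. (if k = i then K$k$j else 0) - (if k = r i then (if i \<notin> R then K$k$j else 0) else 0))"
      by (intro sum.cong refl) auto
    also have "\<dots> = (\<Sum>k\<in>UNIV. (if k = i then K$k$j else 0)) - (\<Sum>k\<in>UNIV. (if k = r i then (if i \<notin> R then K$k$j else 0) else 0))"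
      by (simp add: sum_subtractf)
    also have "\<dots> = K$i$j - (if i \<notin> R then K$(r i)$j else 0)"
      by simp
    finally show ?thesis .
  qed
  have PK1: "(P ** K) $ i $ j = e * ((if j = i then 1 else 0) - (if j = r i then 1 else 0))" if "i \<notin> R" for i j
  proof -
    have "(P ** K) $ i $ j = K$i$j - K$(r i)$j" using that by (simp add: PK)
    also have "\<dots> = e * ((if j = i then 1 else 0) - (if j = r i then 1 else 0))"
      using that inR[of i] by (auto simp: K_def pir algebra_simps)
    finally show ?thesis .
  qed
  have PK2: "(P ** K) $ i $ j = K$i$j" if "i \<in> R" for i j
    using that by (simp add: PK)
  define N where "N = P ** K ** Q"
  have Nent: "N$i$j = (P ** K)$i$j + (\<Sum>k\<in>{k. k \<notin> R \<and> r k = j}. (P ** K)$i$k)" for i j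
    unfolding N_def Q_def by (rule mult_Q_entry) (use inR in auto)
  have Nrow: "N$i$j = (if j = i then e else 0)" if i: "i \<notin> R" for i j
  proof (cases "j \<in> R")
    case False
    then have emp: "{k. k \<notin> R \<and> r k = j} = {}" using rR by auto
    have "j \<noteq> r i" using False rR by metis
    have "N$i$j = (P ** K)$i$j" unfolding Nent emp by simp
    also have "\<dots> = (if j = i then e else 0)" using i \<open>j \<noteq> r i\<close> by (simp add: PK1)
    finally show ?thesis .
  next
    case True
    have "j \<noteq> i" using True i by auto
    have "(\<Sum>k\<in>{k. k \<notin> R \<and> r k = j}. (P ** K)$i$k) = (\<Sum>k\<in>{k. k \<notin> R \<and> r k = j}. (if k = i then e else 0))"
    proof (intro sum.cong refl)
      fix k assume "k \<in> {k. k \<notin> R \<and> r k = j}"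
      then have "k \<noteq> r i" using rR by auto
      then show "(P ** K)$i$k = (if k = i then e else 0)" using i by (simp add: PK1)
    qed
    also have "\<dots> = (if r i = j then e else 0)" using i by (simp add: sum.delta')
    finally have S: "(\<Sum>k\<in>{k. k \<notin> R \<and> r k = j}. (P ** K)$i$k) = (if r i = j then e else 0)" .
    have "(P ** K)$i$j = - (if r i = j then e else 0)" using PK1[OF i, of j] \<open>j \<noteq> i\<close> by auto
    then show ?thesis using \<open>j \<noteq> i\<close> unfolding Nent S by simp
  qed
  have Nrep: "N $ rep s $ rep s' = (if s = s' then e else 0) + (\<Sum>j\<in>{j. \<pi> j = s'}. W s j)" for s s'
  proof -
    have iR: "rep s \<in> R" "rep s' \<in> R" unfolding R_def by auto
    have seteq: "{j. \<pi> j = s'} = insert (rep s') {k. k \<notin> R \<and> r k = rep s'}"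
      using iR by (auto simp: r_def inR[symmetric]) (metis pirep inR r_def)+
    have sumeq: "(\<Sum>j\<in>{j. \<pi> j = s'}. W s j) = W s (rep s') + (\<Sum>k\<in>{k. k \<notin> R \<and> r k = rep s'}. W s k)"
      unfolding seteq using iR by (simp add: sum.insert)
    have "N $ rep s $ rep s' = K $ rep s $ rep s' + (\<Sum>k\<in>{k. k \<notin> R \<and> r k = rep s'}. K $ rep s $ k)"
      using iR by (simp add: Nent PK2)
    also have "(\<Sum>k\<in>{k. k \<notin> R \<and> r k = rep s'}. K $ rep s $ k) = (\<Sum>k\<in>{k. k \<notin> R \<and> r k = rep s'}. W s k)"
      by (intro sum.cong refl) (auto simp: K_def pirep iR)
    also have "K $ rep s $ rep s' = (if s = s' then e else 0) + W s (rep s')"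
      by (simp add: K_def pirep) (metis pirep)
    finally show ?thesis by (simp add: sumeq algebra_simps)
  qed
  have "det N = (\<Prod>i\<in>-R. e) * det (\<chi> s s'. N $ rep s $ rep s')"
    by (rule det_rows_diag_reindex[OF Nrow bij])
  also have "(\<Prod>i\<in>-R. e) = e ^ (CARD('n) - CARD('b))"
  proof -
    have "card R = CARD('b)" using bij by (simp add: bij_betw_same_card[symmetric])
    then have "card (-R) = CARD('n) - CARD('b)" by (simp add: Compl_eq_Diff_UNIV card_Diff_subset)
    then show ?thesis by simp
  qed
  also have "(\<chi> s s'. N $ rep s $ rep s') = (\<chi> s s'. (if s = s' then e else 0) + (\<Sum>j\<in>{j. \<pi> j = s'}. W s j))"
    by (simp add: Nrep)
  finally have "det N = e ^ (CARD('n) - CARD('b)) * det (\<chi> s s'. (if s = s' then e else 0) + (\<Sum>j\<in>{j. \<pi> j = s'}. W s j))" .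
  moreover have "det N = det K" unfolding N_def by (simp add: det_mul detP detQ)
  ultimately show ?thesis by (simp add: K_def)
qed




lemma det_unit_type: "det (A :: 'r::comm_ring_1^unit^unit) = A$()$()"
proof -
  have "{p. p permutes (UNIV::unit set)} = {id}"
    by (auto simp: permutes_id fun_eq_iff)
  then show ?thesis by (simp add: det_def UNIV_unit)
qed

lemma det_scalar_plus_J:
  "det (\<chi> i j. (if i = j then e else 0) + c :: 'r::comm_ring_1^'n::finite^'n) =
     e ^ (CARD('n) - 1) * (e + of_nat CARD('n) * c)"
proof -
  have "det (\<chi> i j. (if i = j then e else 0) + (\<lambda>_ _. c) ((\<lambda>_. ()) i) j :: 'r^'n^'n) =
     e ^ (CARD('n) - CARD(unit)) * det (\<chi> s s'. (if s = s' then e else 0) + (\<Sum>j\<in>{j. (\<lambda>_. ()) j = s'}. (\<lambda>_ _. c) s (j::'n)))"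
    by (rule det_block_rank) auto
  then show ?thesis by (simp add: det_unit_type)
qed

lemma det_kron:
  fixes Y :: "'r::comm_ring_1^'u::finite^'u"
  shows "det (\<chi> (i::'u\<times>'v::finite) j. if snd i = snd j then Y$fst i$fst j else 0) = det Y ^ CARD('v)"
proof -
  define MT where "MT T = (\<chi> (i::'u\<times>'v) j. if snd i = snd j \<and> snd i \<in> T then Y$fst i$fst j else (if i = j then 1 else 0))" for T
  have dets: "det (MT {s}) = det Y" for s
  proof -
    have bij: "bij_betw (\<lambda>a. (a, s)) UNIV {i. snd i = s}"
      by (auto simp: bij_betw_def inj_on_def image_def)
    have dd: "\<And>i j. i \<notin> {i. snd i = s} \<Longrightarrow> MT {s} $ i $ j = (if j = i then 1 else 0)"
      by (auto simp: MT_def)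
    have "det (MT {s}) = det (\<chi> a a'. MT {s} $ (a, s) $ (a', s))"
      using det_rows_diag_reindex[OF dd bij] by simp
    also have "(\<chi> a a'. MT {s} $ (a, s) $ (a', s)) = Y"
      by (simp add: MT_def vec_eq_iff)
    finally show ?thesis by simp
  qed
  have prod: "MT (insert s T) = MT {s} ** MT T" if "s \<notin> T" for s T
  proof -
    have "(MT {s} ** MT T) $ i $ j = MT (insert s T) $ i $ j" for i j
    proof (cases "snd i = s")
      case True
      have "(MT {s} ** MT T) $ i $ j = (\<Sum>k\<in>UNIV. MT {s} $ i $ k * MT T $ k $ j)"
        by (simp add: matrix_matrix_mult_def)
      also have "\<dots> = (\<Sum>k\<in>UNIV. if k = j then (if snd j = s then Y$fst i$fst j else 0) else 0)"
        by (intro sum.cong refl) (use True that in \<open>auto simp: MT_def\<close>)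
      also have "\<dots> = MT (insert s T) $ i $ j"
        using True by (auto simp: MT_def)
      finally show ?thesis .
    next
      case False
      have "(MT {s} ** MT T) $ i $ j = (\<Sum>k\<in>UNIV. MT {s} $ i $ k * MT T $ k $ j)"
        by (simp add: matrix_matrix_mult_def)
      also have "\<dots> = (\<Sum>k\<in>UNIV. if k = i then MT T $ i $ j else 0)"
        by (intro sum.cong refl) (use False in \<open>auto simp: MT_def\<close>)
      also have "\<dots> = MT (insert s T) $ i $ j"
        using False by (auto simp: MT_def)
      finally show ?thesis .
    qed
    then show ?thesis by (simp add: vec_eq_iff)
  qed
  have "det (MT T) = det Y ^ card T" if "finite T" for T
    using that
  proof (induction T rule: finite_induct)
    case empty
    have "MT {} = mat 1" by (simp add: MT_def mat_def vec_eq_iff)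
    then show ?case by (metis det_I power_0 card.empty)
  next
    case (insert s T)
    have "det (MT (insert s T)) = det Y * det (MT T)" unfolding prod[OF insert(2)] det_mul dets ..
    then show ?case using insert by simp
  qed
  then have "det (MT UNIV) = det Y ^ CARD('v)" by simp
  moreover have "MT UNIV = (\<chi> (i::'u\<times>'v) j. if snd i = snd j then Y$fst i$fst j else 0)"
    by (auto simp: MT_def vec_eq_iff)
  ultimately show ?thesis by simp
qed



typedef (overloaded) ('a::field) nz = "{x::'a. x \<noteq> 0}" morphisms val Abs_nz
  by (rule exI[of _ 1]) simp

setup_lifting type_definition_nz

instantiation nz :: (field) "{comm_monoid_mult, inverse}"
begin
lift_definition one_nz :: "'a nz" is 1 by simp
lift_definition times_nz :: "'a nz \<Rightarrow> 'a nz \<Rightarrow> 'a nz" is "(*)" by simp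
lift_definition inverse_nz :: "'a nz \<Rightarrow> 'a nz" is inverse by simp
lift_definition divide_nz :: "'a nz \<Rightarrow> 'a nz \<Rightarrow> 'a nz" is "(/)" by simp
instance by standard (transfer; simp add: ac_simps)+
end

instance nz :: ("{field,finite}") finite
proof
  have "(UNIV :: 'a nz set) = Abs_nz ` {x. x \<noteq> 0}"
    using type_definition.Abs_image[OF type_definition_nz] by metis
  moreover have "finite (Abs_nz ` {x::'a. x \<noteq> 0})" by (rule finite_imageI) simp
  ultimately show "finite (UNIV :: 'a nz set)" by simp
qed

lemma val_power: "val (x ^ k) = val x ^ k"
  by (induction k) (simp_all add: one_nz.rep_eq times_nz.rep_eq)

lemma nz_eq_iff: "x = y \<longleftrightarrow> val x = val y"
  by (simp add: val_inject)

lemma nz_div_mult [simp]: "(x :: 'a::field nz) / y * y = x"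
  by transfer simp
lemma nz_mult_div [simp]: "(x :: 'a::field nz) * y / y = x"
  by transfer simp
lemma nz_mult_div2 [simp]: "(x :: 'a::field nz) * (y / x) = y"
  by transfer simp
lemma nz_div_self [simp]: "(x :: 'a::field nz) / x = 1"
  by transfer simp
lemma nz_div_one [simp]: "(x :: 'a::field nz) / 1 = x"
  by transfer simp
lemma nz_div_eq_iff: "(x :: 'a::field nz) / k = u \<longleftrightarrow> k = x / u"
  by transfer (auto simp: field_simps)
lemma nz_mult_eq_iff: "(x :: 'a::field nz) * k = u \<longleftrightarrow> k = u / x"
  by transfer (auto simp: field_simps)
lemma nz_div_div: "(x :: 'a::field nz) / (z * w) = x / z / w"
  by transfer (auto simp: field_simps)
lemma nz_div_power: "((x :: 'a::field nz) / y) ^ k = x ^ k / y ^ k"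
  by (simp add: nz_eq_iff val_power divide_nz.rep_eq power_divide)
lemma nz_mult_left_cancel: "(x :: 'a::field nz) * y = x * z \<longleftrightarrow> y = z"
  by transfer auto
lemma nz_div_left_inj: "(x :: 'a::field nz) / y = x / z \<longleftrightarrow> y = z"
  by transfer (auto simp: field_simps)
lemma nz_div_right_inj: "(x :: 'a::field nz) / z = y / z \<longleftrightarrow> x = y"
  by transfer (auto simp: field_simps)

lemma card_nz: "CARD('a::{field,finite} nz) = CARD('a) - 1"
proof -
  have r: "range val = {x::'a. x \<noteq> 0}" by (rule type_definition.Rep_range[OF type_definition_nz])
  have i: "inj (val :: 'a nz \<Rightarrow> 'a)" by (rule injI) (simp add: val_inject)
  have "CARD('a nz) = card (range (val :: 'a nz \<Rightarrow> 'a))" by (rule card_image[OF i, symmetric])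
  also have "\<dots> = card (UNIV - {0::'a})" unfolding r by (rule arg_cong[where f=card]) blast
  also have "\<dots> = CARD('a) - 1" by (rule card_Diff_singleton) simp
  finally show ?thesis .
qed

lemma nz_pow_card: "(x :: 'a::{field,finite} nz) ^ CARD('a nz) = 1"
proof -
  define P where "P = (\<Prod>y\<in>(UNIV::'a nz set). y)"
  have bij: "bij_betw (\<lambda>y. x * y) UNIV (UNIV :: 'a nz set)"
    by (rule bij_betwI[where g="\<lambda>y. y / x"]) (simp_all add: mult.commute)
  have "(\<Prod>y\<in>UNIV. x * y) = P"
    using prod.reindex_bij_betw[OF bij, of "\<lambda>y. y"] by (simp add: P_def)
  moreover have "(\<Prod>y\<in>UNIV. x * y) = x ^ CARD('a nz) * P"
    by (simp add: prod.distrib P_def)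
  ultimately have eq: "x ^ CARD('a nz) * P = P"
    by simp
  have "x ^ CARD('a nz) = x ^ CARD('a nz) * P / P" by (rule nz_mult_div[symmetric])
  also have "\<dots> = 1" by (simp only: eq nz_div_self)
  finally show ?thesis .
qed

definition Ymat :: "('a::{field,finite} nz \<Rightarrow> 'r::comm_ring_1) \<Rightarrow> 'r^'a nz^'a nz" where
  "Ymat y = (\<chi> a c. y (a / c))"

definition eps :: "('a::{field,finite} nz \<Rightarrow> 'r::comm_ring_1) \<Rightarrow> 'r" where
  "eps y = (\<Sum>a\<in>UNIV. y a)"

lemma sum_div_reindex: "(\<Sum>k\<in>UNIV. y ((a::'a::{field,finite} nz) / k)) = (\<Sum>k\<in>UNIV. (y k :: 'r::comm_ring_1))"
proof -
  have bij: "bij_betw (\<lambda>k. a / k) UNIV (UNIV :: 'a nz set)"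
    by (rule bij_betwI[where g="\<lambda>k. a / k"]) (simp_all add: nz_div_eq_iff)
  show ?thesis using sum.reindex_bij_betw[OF bij, of y] by simp
qed

lemma Jtrick:
  fixes y :: "'a::{field,finite} nz \<Rightarrow> int"
  assumes e: "eps y \<noteq> 0"
  shows "eps y * det (Ymat (\<lambda>a. y a + 1)) = (eps y + int CARD('a nz)) * det (Ymat y)"
proof -
  let ?e = "eps y" and ?n = "CARD('a nz)"
  have prodm: "Ymat y ** (\<chi> i j. (if i = j then ?e else 0) + 1) = (\<chi> i. ?e *s (Ymat (\<lambda>a. y a + 1) $ i))"
  proof -
    have "(Ymat y ** (\<chi> i j. (if i = j then ?e else 0) + 1)) $ a $ c = ?e * (y (a / c) + 1)" for a c
    proof -
      have "(Ymat y ** (\<chi> i j. (if i = j then ?e else 0) + 1)) $ a $ c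
          = (\<Sum>k\<in>UNIV. y (a / k) * ((if k = c then ?e else 0) + 1))"
        by (simp add: matrix_matrix_mult_def Ymat_def)
      also have "\<dots> = (\<Sum>k\<in>UNIV. (if k = c then y (a / k) * ?e else 0) + y (a / k))"
        by (intro sum.cong refl) (auto simp: algebra_simps)
      also have "\<dots> = (\<Sum>k\<in>UNIV. (if k = c then y (a / k) * ?e else 0)) + (\<Sum>k\<in>UNIV. y (a / k))"
        by (simp add: sum.distrib)
      also have "\<dots> = ?e * (y (a / c) + 1)"
        by (simp add: sum_div_reindex eps_def algebra_simps)
      finally show ?thesis .
    qed
    then show ?thesis by (simp add: vec_eq_iff Ymat_def)
  qed
  have eq1: "det (Ymat y) * det (\<chi> i j. (if i = j then ?e else 0) + 1 :: int^'a nz^'a nz) = ?e ^ ?n * det (Ymat (\<lambda>a. y a + 1))"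
  proof -
    have "det (\<chi> i. ?e *s (Ymat (\<lambda>a. y a + 1) $ i)) = ?e ^ ?n * det (Ymat (\<lambda>a. y a + 1))"
      using det_rows_mul[of "\<lambda>i. ?e" "\<lambda>i. Ymat (\<lambda>a. y a + 1) $ i"] by (simp add: vec_lambda_eta)
    then show ?thesis by (metis det_mul prodm)
  qed
  have eq2: "det (\<chi> i j. (if i = j then ?e else 0) + 1 :: int^'a nz^'a nz) = ?e ^ (?n - 1) * (?e + int ?n)"
    by (subst det_scalar_plus_J) (simp only: mult_1_right)
  have n0: "?n > 0" by simp
  have pw: "?e ^ ?n = ?e ^ (?n - 1) * ?e" using n0 by (metis Suc_diff_1 power_Suc2)
  have "?e ^ (?n - 1) * (det (Ymat y) * (?e + int ?n)) = det (Ymat y) * (?e ^ (?n - 1) * (?e + int ?n))"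
    by (simp only: ac_simps)
  also have "\<dots> = ?e ^ ?n * det (Ymat (\<lambda>a. y a + 1))" using eq1 eq2 by simp
  also have "\<dots> = ?e ^ (?n - 1) * (?e * det (Ymat (\<lambda>a. y a + 1)))" unfolding pw by (simp only: ac_simps)
  finally have calc: "?e ^ (?n - 1) * (det (Ymat y) * (?e + int ?n)) = ?e ^ (?n - 1) * (?e * det (Ymat (\<lambda>a. y a + 1)))" .
  have ne: "?e ^ (?n - 1) \<noteq> 0" using e by simp
  have X: "det (Ymat y) * (?e + int ?n) = ?e * det (Ymat (\<lambda>a. y a + 1))"
    using mult_left_cancel[OF ne] calc by blast
  then show ?thesis by (simp add: ac_simps)
qed



lemma nz_eq_div_iff: "(u :: 'a::field nz) = v / w \<longleftrightarrow> u * w = v"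
  by transfer (auto simp: field_simps)
lemma nz_div_eq_iff2: "(k :: 'a::field nz) / z = w \<longleftrightarrow> k = w * z"
  by transfer (auto simp: field_simps)

definition gen :: "'a::{field,finite} nz" where
  "gen = (SOME g. \<forall>x. \<exists>i. x = g ^ i)"

lemma gen_spec: "\<exists>i. x = (gen :: 'a::{field,finite} nz) ^ i"
proof -
  obtain g :: 'a where g: "g \<noteq> 0" "\<forall>x. x \<noteq> 0 \<longrightarrow> (\<exists>i::nat. x = g ^ i)"
    using gen_exists by blast
  have "\<forall>x. \<exists>i. x = Abs_nz g ^ i"
  proof
    fix x :: "'a nz"
    have "val x \<noteq> 0" using val by auto
    then obtain i where "val x = g ^ i" using g by blast
    then have "val x = val (Abs_nz g ^ i)" using g by (simp add: val_power Abs_nz_inverse)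
    then show "\<exists>i. x = Abs_nz g ^ i" by (auto simp: nz_eq_iff)
  qed
  then have "\<forall>x. \<exists>i. x = (gen :: 'a nz) ^ i" unfolding gen_def by (rule someI)
  then show ?thesis by blast
qed

abbreviation NN :: "'a::{field,finite} itself \<Rightarrow> nat" where "NN _ \<equiv> CARD('a nz)"

lemma pow_mod: "(x :: 'a::{field,finite} nz) ^ i = x ^ (i mod CARD('a nz))"
proof -
  have "x ^ i = x ^ (CARD('a nz) * (i div CARD('a nz)) + i mod CARD('a nz))" by simp
  also have "\<dots> = (x ^ CARD('a nz)) ^ (i div CARD('a nz)) * x ^ (i mod CARD('a nz))"
    by (simp only: power_add power_mult)
  also have "\<dots> = x ^ (i mod CARD('a nz))" by (simp add: nz_pow_card)
  finally show ?thesis .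
qed

lemma gen_image: "(\<lambda>i. (gen :: 'a::{field,finite} nz) ^ i) ` {..<CARD('a nz)} = UNIV"
proof -
  have "x \<in> (\<lambda>i. (gen :: 'a nz) ^ i) ` {..<CARD('a nz)}" for x
  proof -
    obtain i where "x = (gen :: 'a nz) ^ i" using gen_spec by blast
    then have "x = gen ^ (i mod CARD('a nz))" by (simp add: pow_mod[of gen i])
    moreover have "i mod CARD('a nz) < CARD('a nz)" by simp
    ultimately show ?thesis by blast
  qed
  then show ?thesis by blast
qed

lemma gen_inj: "inj_on (\<lambda>i. (gen :: 'a::{field,finite} nz) ^ i) {..<CARD('a nz)}"
  by (rule eq_card_imp_inj_on) (simp_all add: gen_image)

lemma gen_eq_iff: "(gen :: 'a::{field,finite} nz) ^ i = gen ^ j \<longleftrightarrow> i mod CARD('a nz) = j mod CARD('a nz)"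
proof -
  have "(gen :: 'a nz) ^ i = gen ^ j \<longleftrightarrow> (gen :: 'a nz) ^ (i mod CARD('a nz)) = gen ^ (j mod CARD('a nz))"
    by (metis pow_mod)
  also have "\<dots> \<longleftrightarrow> i mod CARD('a nz) = j mod CARD('a nz)"
    using gen_inj[where 'a='a] by (auto simp: inj_on_def)
  finally show ?thesis .
qed

lemma gen_shift_bij: "bij_betw (\<lambda>i. (gen :: 'a::{field,finite} nz) ^ (r + i)) {..<CARD('a nz)} UNIV"
proof -
  have inj: "inj_on (\<lambda>i. (gen :: 'a nz) ^ (r + i)) {..<CARD('a nz)}"
  proof
    fix i j assume ij: "i \<in> {..<CARD('a nz)}" "j \<in> {..<CARD('a nz)}" "(gen :: 'a nz) ^ (r + i) = gen ^ (r + j)"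
    then have "(r + i) mod CARD('a nz) = (r + j) mod CARD('a nz)" by (simp add: gen_eq_iff)
    then have "i mod CARD('a nz) = j mod CARD('a nz)" by (metis cong_def cong_add_lcancel_nat)
    then show "i = j" using ij by simp
  qed
  have "card ((\<lambda>i. (gen :: 'a nz) ^ (r + i)) ` {..<CARD('a nz)}) = CARD('a nz)"
    using card_image[OF inj] by simp
  then have "(\<lambda>i. (gen :: 'a nz) ^ (r + i)) ` {..<CARD('a nz)} = UNIV"
    by (metis card_subset_eq finite subset_UNIV)
  then show ?thesis using inj by (simp add: bij_betw_def)
qed

lemma sum_gen_one: "(\<Sum>i<CARD('a nz). if (gen :: 'a::{field,finite} nz) ^ (r + i) = \<alpha> then 1 else (0::int)) = 1"
  using sum.reindex_bij_betw[OF gen_shift_bij[of r], of "\<lambda>x. if x = \<alpha> then 1 else (0::int)"] by simp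

definition cnt :: "'a::{field,finite} nz \<Rightarrow> nat \<Rightarrow> 'a nz \<Rightarrow> int" where
  "cnt d r \<alpha> = (\<Sum>i<r. if d ^ i = \<alpha> then 1 else 0)"

lemma eps_cnt: "eps (cnt d r) = int r"
proof -
  have "eps (cnt d r) = (\<Sum>i<r. \<Sum>\<alpha>\<in>UNIV. if d ^ i = \<alpha> then 1 else (0::int))"
    unfolding eps_def cnt_def by (rule sum.swap)
  also have "\<dots> = int r" by simp
  finally show ?thesis .
qed

lemma sum_lessThan_add: "(\<Sum>m<(r::nat) + s. f m) = (\<Sum>m<r. f m) + (\<Sum>i<s. f (r + i) :: 'r::comm_monoid_add)"
  by (induction s) (simp_all add: add.assoc)

lemma sum_ab: "(\<Sum>m<(a::nat) * b. f m) = (\<Sum>i<a. \<Sum>j<b. f (i + a * j) :: 'r::comm_monoid_add)"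
proof (induction b)
  case 0 then show ?case by simp
next
  case (Suc b)
  have "(\<Sum>m<a * Suc b. f m) = (\<Sum>m<a * b + a. f m)" by (simp add: add.commute)
  also have "\<dots> = (\<Sum>m<a * b. f m) + (\<Sum>i<a. f (a * b + i))" by (rule sum_lessThan_add)
  also have "\<dots> = (\<Sum>i<a. \<Sum>j<b. f (i + a * j)) + (\<Sum>i<a. f (i + a * b))" by (simp add: Suc add.commute)
  also have "\<dots> = (\<Sum>i<a. \<Sum>j<Suc b. f (i + a * j))" by (simp add: sum.distrib)
  finally show ?case .
qed

lemma cnt_mult: "Ymat (cnt d (a * b)) = Ymat (cnt d a) ** Ymat (cnt (d ^ a) b)"
proof -
  have "(Ymat (cnt d a) ** Ymat (cnt (d ^ a) b)) $ x $ z = cnt d (a * b) (x / z)" for x z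
  proof -
    have "(Ymat (cnt d a) ** Ymat (cnt (d ^ a) b)) $ x $ z = (\<Sum>k\<in>UNIV. cnt d a (x / k) * cnt (d ^ a) b (k / z))"
      by (simp add: matrix_matrix_mult_def Ymat_def)
    also have "\<dots> = (\<Sum>k\<in>UNIV. \<Sum>i<a. \<Sum>j<b. (if d ^ i = x / k then 1 else 0) * (if (d ^ a) ^ j = k / z then 1 else 0))"
      unfolding cnt_def by (simp add: sum_product)
    also have "\<dots> = (\<Sum>i<a. \<Sum>j<b. \<Sum>k\<in>UNIV. (if d ^ i = x / k then 1 else 0) * (if (d ^ a) ^ j = k / z then 1 else 0))"
      by (simp add: sum.swap[of _ UNIV])
    also have "\<dots> = (\<Sum>i<a. \<Sum>j<b. (if d ^ (i + a * j) = x / z then 1 else 0))"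
    proof (intro sum.cong refl)
      fix i j
      have "(\<Sum>k\<in>UNIV. (if d ^ i = x / k then 1 else 0) * (if (d ^ a) ^ j = k / z then 1 else (0::int)))
          = (\<Sum>k\<in>UNIV. if k = (d ^ a) ^ j * z then (if d ^ (i + a * j) = x / z then 1 else 0) else 0)"
      proof (intro sum.cong refl)
        fix k
        show "(if d ^ i = x / k then 1 else 0) * (if (d ^ a) ^ j = k / z then 1 else (0::int))
          = (if k = (d ^ a) ^ j * z then (if d ^ (i + a * j) = x / z then 1 else 0) else 0)"
        proof (cases "k = (d ^ a) ^ j * z")
          case True
          have "d ^ i = x / k \<longleftrightarrow> d ^ (i + a * j) = x / z"
            unfolding True nz_eq_div_iff by (simp add: power_add power_mult ac_simps)
          then show ?thesis using True by (simp add: nz_div_eq_iff2)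
        next
          case False
          then have "(d ^ a) ^ j \<noteq> k / z" by (simp add: eq_commute[of "(d ^ a) ^ j"] nz_div_eq_iff2)
          then show ?thesis using False by simp
        qed
      qed
      also have "\<dots> = (if d ^ (i + a * j) = x / z then 1 else 0)" by simp
      finally show "(\<Sum>k\<in>UNIV. (if d ^ i = x / k then 1 else 0) * (if (d ^ a) ^ j = k / z then 1 else (0::int)))
          = (if d ^ (i + a * j) = x / z then 1 else 0)" .
    qed
    also have "\<dots> = cnt d (a * b) (x / z)"
      unfolding cnt_def by (rule sum_ab[symmetric])
    finally show ?thesis .
  qed
  then show ?thesis by (simp add: vec_eq_iff Ymat_def)
qed



lemma inj_perm_univ: "inj (p :: 'n::finite \<Rightarrow> 'n) \<Longrightarrow> p permutes UNIV"
  by (rule bij_imp_permutes) (simp_all add: bij_betw_def finite_UNIV_inj_surj)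

lemma det_perm_both:
  fixes A :: "'r::comm_ring_1^'n::finite^'n"
  assumes p: "p permutes UNIV"
  shows "det (\<chi> i j. A$p i$p j) = det A"
proof -
  define B where "B = (\<chi> i. A $ p i)"
  have "(\<chi> i j. A$p i$p j) = (\<chi> i j. B$i$p j)" by (simp add: B_def)
  then have "det (\<chi> i j. A$p i$p j) = of_int (sign p) * det B" using det_permute_columns[OF p, of B] by simp
  also have "det B = of_int (sign p) * det A" unfolding B_def by (rule det_permute_rows[OF p])
  finally show ?thesis by (simp add: mult.assoc[symmetric] of_int_mult[symmetric])
qed

lemma pow_inj:
  assumes "coprime a (CARD('a::{field,finite} nz))"
  shows "inj (\<lambda>x::'a nz. x ^ a)"
proof
  fix x y :: "'a nz" assume eq: "x ^ a = y ^ a"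
  obtain i where i: "x = gen ^ i" using gen_spec by blast
  obtain j where j: "y = gen ^ j" using gen_spec by blast
  have "(gen :: 'a nz) ^ (i * a) = gen ^ (j * a)" using eq by (simp add: i j power_mult)
  then have "[i * a = j * a] (mod CARD('a nz))" by (simp add: gen_eq_iff cong_def)
  then have "[i = j] (mod CARD('a nz))" using cong_mult_rcancel_nat[OF assms] by blast
  then show "x = y" by (simp add: i j gen_eq_iff cong_def)
qed

lemma cnt_pow_det:
  assumes "coprime a (CARD('a::{field,finite} nz))"
  shows "det (Ymat (cnt ((gen :: 'a nz) ^ a) b)) = det (Ymat (cnt (gen :: 'a nz) b))"
proof -
  let ?t = "\<lambda>x::'a nz. x ^ a"
  have inj: "inj ?t" by (rule pow_inj[OF assms])
  have eq: "Ymat (cnt (gen :: 'a nz) b) = (\<chi> i j. Ymat (cnt ((gen :: 'a nz) ^ a) b) $ ?t i $ ?t j)"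
  proof -
    have "cnt (gen :: 'a nz) b (i / j) = cnt ((gen :: 'a nz) ^ a) b (i ^ a / j ^ a)" for i j :: "'a nz"
      unfolding cnt_def
    proof (intro sum.cong refl)
      fix k
      have "((gen :: 'a nz) ^ a) ^ k = (gen ^ k) ^ a" by (simp add: power_mult[symmetric] mult.commute)
      moreover have "i ^ a / j ^ a = (i / j) ^ a" by (simp add: nz_div_power)
      moreover have "(gen ^ k) ^ a = (i / j) ^ a \<longleftrightarrow> gen ^ k = i / j" using inj by (auto simp: inj_def)
      ultimately show "(if gen ^ k = i / j then 1 else 0) = (if (gen ^ a) ^ k = i ^ a / j ^ a then 1 else (0::int))"
        by simp
    qed
    then show ?thesis by (simp add: Ymat_def vec_eq_iff)
  qed
  have "det (\<chi> i j. Ymat (cnt ((gen :: 'a nz) ^ a) b) $ ?t i $ ?t j) = det (Ymat (cnt ((gen :: 'a nz) ^ a) b))"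
    by (rule det_perm_both[OF inj_perm_univ[OF inj]])
  then show ?thesis unfolding eq by (rule sym)
qed

lemma cnt_add_n: "Ymat (cnt (gen :: 'a::{field,finite} nz) (r + CARD('a nz))) = Ymat (\<lambda>\<alpha>. cnt gen r \<alpha> + 1)"
proof -
  have "cnt (gen :: 'a nz) (r + CARD('a nz)) \<alpha> = cnt gen r \<alpha> + 1" for \<alpha>
    unfolding cnt_def by (simp add: sum_lessThan_add sum_gen_one)
  then show ?thesis by (simp add: Ymat_def)
qed

lemma cnt_one: "Ymat (cnt d 1) = mat 1"
proof -
  have "cnt d 1 (a / c) = (if a = c then 1 else 0)" for a c
    by (simp add: cnt_def eq_commute[of 1] nz_div_eq_iff2)
  then show ?thesis by (simp add: Ymat_def mat_def vec_eq_iff)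
qed

lemma cnt_one': "Ymat (cnt d (Suc 0)) = mat 1"
  using cnt_one[of d] by simp

definition DD :: "'a::{field,finite} itself \<Rightarrow> nat \<Rightarrow> int" where
  "DD _ r = det (Ymat (cnt (gen :: 'a nz) r))"

lemma DD_pow:
  assumes "coprime r (CARD('a::{field,finite} nz))"
  shows "DD TYPE('a) (r ^ m) = DD TYPE('a) r ^ m"
proof (induction m)
  case 0 then show ?case by (simp add: DD_def cnt_one')
next
  case (Suc m)
  have "DD TYPE('a) (r ^ Suc m) = det (Ymat (cnt (gen :: 'a nz) (r * r ^ m)))" by (simp add: DD_def)
  also have "\<dots> = DD TYPE('a) r * det (Ymat (cnt ((gen :: 'a nz) ^ r) (r ^ m)))"
    by (simp add: cnt_mult det_mul DD_def)
  also have "det (Ymat (cnt ((gen :: 'a nz) ^ r) (r ^ m))) = DD TYPE('a) (r ^ m)"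
    unfolding DD_def by (rule cnt_pow_det[OF assms])
  finally show ?case using Suc by simp
qed

lemma DD_lin: "DD TYPE('a::{field,finite}) (1 + k * CARD('a nz)) = int (1 + k * CARD('a nz))"
proof (induction k)
  case 0 then show ?case by (simp add: DD_def cnt_one')
next
  case (Suc k)
  let ?r = "1 + k * CARD('a nz)"
  have e: "eps (cnt (gen :: 'a nz) ?r) = int ?r" by (rule eps_cnt)
  have ne: "eps (cnt (gen :: 'a nz) ?r) \<noteq> 0" unfolding e by (simp only: of_nat_eq_0_iff)
  have J: "eps (cnt (gen :: 'a nz) ?r) * det (Ymat (\<lambda>a. cnt (gen :: 'a nz) ?r a + 1)) = (eps (cnt (gen :: 'a nz) ?r) + int CARD('a nz)) * det (Ymat (cnt (gen :: 'a nz) ?r))"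
    by (rule Jtrick[of "cnt (gen :: 'a nz) ?r"]) (rule ne)
  have Y1: "Ymat (\<lambda>a. cnt (gen :: 'a nz) ?r a + 1) = Ymat (cnt (gen :: 'a nz) (?r + CARD('a nz)))"
    by (rule cnt_add_n[symmetric])
  have D0: "det (Ymat (cnt (gen :: 'a nz) ?r)) = int ?r" using Suc.IH by (simp only: DD_def)
  have "int ?r * DD TYPE('a) (?r + CARD('a nz)) = int ?r * (int ?r + int CARD('a nz))"
    using J by (simp only: e Y1 D0 DD_def mult.commute)
  then have X: "DD TYPE('a) (?r + CARD('a nz)) = int ?r + int CARD('a nz)"
    using mult_left_cancel[of "int ?r"] by (simp only: of_nat_eq_0_iff)
  have eq: "1 + Suc k * CARD('a nz) = ?r + CARD('a nz)" by simp
  show ?case unfolding eq of_nat_add[of ?r] by (rule X)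
qed

lemma DD_abs:
  assumes "coprime r (CARD('a::{field,finite} nz))" "r > 0"
  shows "\<bar>DD TYPE('a) r\<bar> = int r"
proof -
  let ?n = "CARD('a nz)" and ?f = "totient CARD('a nz)"
  have f0: "?f > 0" by simp
  have "[r ^ ?f = 1] (mod ?n)" by (rule euler_theorem[OF assms(1)])
  moreover have "r ^ ?f \<ge> 1" using assms(2) by simp
  ultimately have "?n dvd r ^ ?f - 1" by (simp add: cong_altdef_nat)
  then obtain k where k: "r ^ ?f - 1 = ?n * k" by blast
  have rk: "r ^ ?f = 1 + k * ?n" using k \<open>r ^ ?f \<ge> 1\<close> by (simp add: mult.commute)
  have "DD TYPE('a) r ^ ?f = int (r ^ ?f)" using DD_pow[OF assms(1), of ?f] DD_lin[of k, where 'a='a] by (simp add: rk)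
  then have "\<bar>DD TYPE('a) r\<bar> ^ ?f = int r ^ ?f" by (metis of_nat_power power_abs abs_of_nat)
  then show ?thesis by (rule power_eq_imp_eq_base) (simp_all add: f0)
qed

lemma sign_cycle:
  assumes "distinct cs" "cs \<noteq> []"
  shows "sign (cycle_of_list cs) = (-1) ^ (length cs - 1)"
  using assms
proof (induction cs rule: cycle_of_list.induct)
  case (1 i j cs)
  have "sign (cycle_of_list (i # j # cs)) = sign (Transposition.transpose i j \<circ> cycle_of_list (j # cs))"
    by (simp only: cycle_of_list.simps)
  also have "\<dots> = sign (Transposition.transpose i j) * sign (cycle_of_list (j # cs))"
    by (rule sign_compose[OF permutation_swap_id permutation_of_cycle])
  also have "\<dots> = (-1) * (-1) ^ (length (j # cs) - 1)"
    using 1 by (simp add: sign_swap_id)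
  finally show ?case by (simp del: cycle_of_list.simps)
qed auto

lemma shift_cycle: "(\<lambda>x. x * (gen :: 'a::{field,finite} nz)) = cycle_of_list (map (\<lambda>i. gen ^ i) [0..<CARD('a nz)])"
proof
  fix x :: "'a nz"
  let ?L = "map (\<lambda>i. (gen :: 'a nz) ^ i) [0..<CARD('a nz)]"
  have d: "distinct ?L" using gen_inj[where 'a='a] by (simp add: distinct_map atLeast0LessThan)
  obtain k where k: "k < CARD('a nz)" "x = gen ^ k" using gen_image[where 'a='a] by (metis imageE lessThan_iff UNIV_I)
  have "map (cycle_of_list ?L) ?L = rotate1 ?L"
    using cyclic_rotation[OF d, of 1] by simp
  then have "cycle_of_list ?L (?L ! k) = rotate1 ?L ! k" using k by (metis length_map length_upt minus_nat.diff_0 nth_map)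
  also have "\<dots> = ?L ! (Suc k mod CARD('a nz))" using k by (simp add: nth_rotate1)
  also have "\<dots> = gen ^ (Suc k mod CARD('a nz))" by simp
  also have "\<dots> = gen ^ Suc k" by (metis pow_mod)
  finally show "x * gen = cycle_of_list ?L x" using k by (simp add: mult.commute)
qed

lemma sign_shift: "sign (\<lambda>x. x * (gen :: 'a::{field,finite} nz)) = (-1) ^ (CARD('a nz) - 1)"
proof -
  have d: "distinct (map (\<lambda>i. (gen :: 'a nz) ^ i) [0..<CARD('a nz)])"
    using gen_inj[where 'a='a] by (simp add: distinct_map atLeast0LessThan)
  have ne: "map (\<lambda>i. (gen :: 'a nz) ^ i) [0..<CARD('a nz)] \<noteq> []" by simp
  show ?thesis unfolding shift_cycle using sign_cycle[OF d ne] by simp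
qed



lemma nz_div_mult_comm: "(a :: 'a::field nz) / c * g = a * g / c"
  by transfer (simp add: field_simps)

lemma exists_Y:
  fixes A :: int
  assumes A0: "A \<noteq> 0" and cop: "coprime (nat \<bar>A\<bar>) (CARD('a::{field,finite} nz))"
  shows "\<exists>y :: 'a nz \<Rightarrow> int. det (Ymat y) = A \<and> (eps y = A \<or> eps y = - A)"
proof -
  let ?n = "CARD('a nz)"
  define r where "r = nat \<bar>A\<bar>"
  have r0: "r > 0" using A0 by (simp add: r_def)
  have rA: "int r = \<bar>A\<bar>" by (simp add: r_def)
  have absD: "\<bar>DD TYPE('a) r\<bar> = int r" using DD_abs[OF cop[folded r_def] r0] .
  have epsc: "eps (cnt (gen :: 'a nz) r) = A \<or> eps (cnt (gen :: 'a nz) r) = - A"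
  proof -
    have "eps (cnt (gen :: 'a nz) r) = \<bar>A\<bar>" using rA by (simp add: eps_cnt)
    then show ?thesis by (cases "A \<ge> 0") auto
  qed
  show ?thesis
  proof (cases "DD TYPE('a) r = A")
    case True
    then show ?thesis using epsc by (intro exI[of _ "cnt gen r"]) (simp add: DD_def)
  next
    case False
    have "\<bar>DD TYPE('a) r\<bar> = \<bar>A\<bar>" using absD rA by simp
    then have DA: "DD TYPE('a) r = - A" using False by (simp add: abs_eq_iff)
    show ?thesis
    proof (cases "even ?n")
      case False
      define y where "y = (\<lambda>\<alpha>. - cnt (gen :: 'a nz) r \<alpha>)"
      have "Ymat y = (\<chi> i. (-1) *s (Ymat (cnt (gen :: 'a nz) r) $ i))"
        by (simp add: Ymat_def y_def vec_eq_iff)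
      then have "det (Ymat y) = (\<Prod>i\<in>(UNIV::'a nz set). (-1::int)) * det (Ymat (cnt (gen :: 'a nz) r))"
        using det_rows_mul[of "\<lambda>i. -1" "\<lambda>i. Ymat (cnt (gen :: 'a nz) r) $ i"] by (simp add: vec_lambda_eta)
      also have "\<dots> = A" using False DA by (simp add: DD_def)
      finally have "det (Ymat y) = A" .
      moreover have "eps y = - eps (cnt (gen :: 'a nz) r)" by (simp add: eps_def y_def sum_negf)
      ultimately show ?thesis using epsc by (intro exI[of _ y]) auto
    next
      case True
      define y where "y = (\<lambda>\<alpha>. cnt (gen :: 'a nz) r (\<alpha> * gen))"
      have p: "(\<lambda>x. x * (gen :: 'a nz)) permutes UNIV"
      proof (rule inj_perm_univ, rule injI)
        fix x y :: "'a nz" assume "x * gen = y * gen"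
        then have "x * gen / gen = y * gen / gen" by simp
        then show "x = y" by (simp only: nz_mult_div)
      qed
      have "Ymat y = (\<chi> i. Ymat (cnt (gen :: 'a nz) r) $ (i * gen))"
        by (simp add: Ymat_def y_def vec_eq_iff nz_div_mult_comm)
      then have "det (Ymat y) = of_int (sign (\<lambda>x. x * (gen :: 'a nz))) * det (Ymat (cnt (gen :: 'a nz) r))"
        using det_permute_rows[OF p, of "Ymat (cnt (gen :: 'a nz) r)"] by simp
      also have "\<dots> = A"
      proof -
        have "?n \<ge> 1" by (simp add: Suc_leI)
        then have "odd (?n - 1)" using True by simp
        then show ?thesis using DA by (simp add: sign_shift DD_def)
      qed
      finally have "det (Ymat y) = A" .
      moreover have "eps y = eps (cnt (gen :: 'a nz) r)"
      proof -
        have "bij_betw (\<lambda>x. x * (gen :: 'a nz)) UNIV UNIV" using p by (simp add: permutes_imp_bij)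
        then show ?thesis unfolding eps_def y_def by (rule sum.reindex_bij_betw)
      qed
      ultimately show ?thesis using epsc by (intro exI[of _ y]) auto
    qed
  qed
qed



definition phi :: "'a::field nz \<times> 'a \<Rightarrow> 'a \<times> 'a" where
  "phi i = (val (fst i), val (fst i) * snd i)"

lemma val_nz: "val x \<noteq> 0"
  using val[of x] by simp

lemma phi_bij: "bij_betw (phi :: 'a::field nz \<times> 'a \<Rightarrow> _) UNIV GA1"
proof -
  have inj: "inj (phi :: 'a nz \<times> 'a \<Rightarrow> _)"
  proof (rule injI)
    fix i j :: "'a nz \<times> 'a" assume "phi i = phi j"
    then have "val (fst i) = val (fst j) \<and> val (fst i) * snd i = val (fst j) * snd j"
      unfolding phi_def prod.inject .
    then have eqs: "val (fst i) = val (fst j)" "val (fst i) * snd i = val (fst j) * snd j" by auto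
    have a: "fst i = fst j" using eqs(1) by (simp add: nz_eq_iff)
    have b: "snd i = snd j" using eqs val_nz[of "fst j"] by (metis mult_left_cancel)
    show "i = j" by (simp add: prod_eq_iff a b)
  qed
  have img: "range (phi :: 'a nz \<times> 'a \<Rightarrow> _) = GA1"
  proof
    show "range (phi :: 'a nz \<times> 'a \<Rightarrow> _) \<subseteq> GA1" by (auto simp: phi_def GA1_def val_nz)
    show "GA1 \<subseteq> range (phi :: 'a nz \<times> 'a \<Rightarrow> _)"
    proof
      fix g :: "'a \<times> 'a" assume "g \<in> GA1"
      then have g0: "fst g \<noteq> 0" by (auto simp: GA1_def)
      have "val (Abs_nz (fst g)) = fst g" using g0 by (simp add: Abs_nz_inverse)
      then have "phi (Abs_nz (fst g), snd g / fst g) = g" using g0 by (simp add: phi_def prod_eq_iff)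
      then show "g \<in> range phi" by (metis rangeI)
    qed
  qed
  show ?thesis using inj img by (simp add: bij_betw_def)
qed

definition coef :: "('a::field nz \<Rightarrow> int) \<Rightarrow> int \<Rightarrow> 'a \<times> 'a \<Rightarrow> int" where
  "coef y t g = (if snd g = 0 \<and> fst g \<noteq> 0 then y (Abs_nz (fst g)) + t else 0) - (if snd g = fst g then t else 0)"

definition Wf :: "int \<Rightarrow> 'a::field \<Rightarrow> 'a nz \<times> 'a \<Rightarrow> int" where
  "Wf t s j = t * ((if s = snd j then 1 else 0) - (if s - snd j = inverse (val (fst j)) then 1 else 0))"

lemma coef_entry:
  "coef y t (ga_mult (phi i) (ga_inv (phi j))) =
     (if snd i = snd j then y (fst i / fst j) else 0) + Wf t (snd i) j"
proof -
  obtain u s where i: "i = (u, s)" by fastforce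
  obtain c s' where j: "j = (c, s')" by fastforce
  have u0: "val u \<noteq> 0" and c0: "val c \<noteq> 0" by (simp_all add: val_nz)
  have gm: "ga_mult (phi (u, s)) (ga_inv (phi (c, s'))) = (val u / val c, val u * (s - s'))"
    using c0 by (simp add: phi_def ga_mult_def ga_inv_def field_simps)
  have a: "Abs_nz (val u / val c) = u / c"
    by (metis divide_nz.rep_eq val_inverse)
  have e1: "val u * (s - s') = 0 \<longleftrightarrow> s = s'" using u0 by simp
  have e2: "val u * (s - s') = val u / val c \<longleftrightarrow> s - s' = inverse (val c)"
    using u0 by (simp add: divide_inverse)
  show ?thesis
    unfolding i j gm coef_def Wf_def fst_conv snd_conv
    by (simp only: e1 e2 a) (auto simp: c0 u0)
qed

definition Kmat :: "('a::{field,finite} nz \<Rightarrow> int) \<Rightarrow> int^('a nz \<times> 'a)^('a nz \<times> 'a)" where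
  "Kmat y = (\<chi> i j. if snd i = snd j then y (fst i / fst j) else 0)"

lemma sum_prod_type: "(\<Sum>k\<in>(UNIV :: ('b::finite \<times> 'c::finite) set). f k) = (\<Sum>b\<in>UNIV. \<Sum>s\<in>UNIV. f (b, s) :: 'r::comm_monoid_add)"
  using sum.cartesian_product[of "\<lambda>b s. f (b, s)" UNIV UNIV] by (simp add: UNIV_Times_UNIV)

lemma K_decomp:
  fixes y :: "'a::{field,finite} nz \<Rightarrow> int"
  shows "Kmat y ** (\<chi> i j. (if i = j then eps y else 0) + Wf t (snd i) j) =
         (\<chi> i. eps y *s (\<chi> j. Kmat y $ i $ j + Wf t (snd i) j))"
proof -
  have "(Kmat y ** (\<chi> i j. (if i = j then eps y else 0) + Wf t (snd i) j)) $ i $ j = eps y * (Kmat y $ i $ j + Wf t (snd i) j)" for i j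
  proof -
    have "(Kmat y ** (\<chi> i j. (if i = j then eps y else 0) + Wf t (snd i) j)) $ i $ j
        = (\<Sum>k\<in>UNIV. Kmat y $ i $ k * ((if k = j then eps y else 0) + Wf t (snd k) j))"
      by (simp add: matrix_matrix_mult_def)
    also have "\<dots> = (\<Sum>k\<in>UNIV. (if k = j then Kmat y $ i $ k * eps y else 0) + Kmat y $ i $ k * Wf t (snd k) j)"
      by (intro sum.cong refl) (simp add: distrib_left)
    also have "\<dots> = (\<Sum>k\<in>UNIV. (if k = j then Kmat y $ i $ k * eps y else 0)) + (\<Sum>k\<in>UNIV. Kmat y $ i $ k * Wf t (snd k) j)"
      by (rule sum.distrib)
    also have "(\<Sum>k\<in>UNIV. Kmat y $ i $ k * Wf t (snd k) j) = (\<Sum>b\<in>UNIV. \<Sum>s\<in>UNIV. (if s = snd i then y (fst i / b) * Wf t (snd i) j else 0))"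
      unfolding sum_prod_type by (intro sum.cong refl) (auto simp: Kmat_def)
    also have "\<dots> = (\<Sum>b\<in>UNIV. y (fst i / b) * Wf t (snd i) j)"
      by (intro sum.cong refl) (simp only: sum.delta finite UNIV_I if_True)
    also have "\<dots> = (\<Sum>b\<in>UNIV. y (fst i / b)) * Wf t (snd i) j"
      by (simp add: sum_distrib_right)
    also have "(\<Sum>b\<in>UNIV. y (fst i / b)) = eps y"
      by (simp add: sum_div_reindex eps_def)
    finally show ?thesis by (simp add: algebra_simps)
  qed
  then show ?thesis by (simp add: vec_eq_iff)
qed

lemma sum_inv_count:
  "(\<Sum>c\<in>(UNIV :: 'a::{field,finite} nz set). (if s - s' = inverse (val c) then 1 else (0::int))) = (if s = s' then 0 else 1)"
proof (cases "s = s'")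
  case True
  then show ?thesis by (simp add: val_nz)
next
  case False
  let ?c0 = "Abs_nz (inverse (s - s')) :: 'a nz"
  have v: "val ?c0 = inverse (s - s')" using False by (simp add: Abs_nz_inverse)
  have "s - s' = inverse (val c) \<longleftrightarrow> c = ?c0" for c
    by (simp add: nz_eq_iff v) (metis inverse_inverse_eq)
  then have "(\<Sum>c\<in>(UNIV :: 'a nz set). (if s - s' = inverse (val c) then 1 else (0::int))) = (\<Sum>c\<in>(UNIV :: 'a nz set). (if c = ?c0 then 1 else 0))"
    by (intro sum.cong) auto
  then show ?thesis using False by simp
qed

lemma det_IW:
  fixes e t :: int
  shows "det (\<chi> (i::'a::{field,finite} nz \<times> 'a) j. (if i = j then e else 0) + Wf t (snd i) j) =
     e ^ (CARD('a nz \<times> 'a) - CARD('a)) * ((e + t * int CARD('a)) ^ (CARD('a) - 1) * e)"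
proof -
  have "det (\<chi> (i::'a nz \<times> 'a) j. (if i = j then e else 0) + Wf t (snd i) j) =
     e ^ (CARD('a nz \<times> 'a) - CARD('a)) * det (\<chi> s s'. (if s = s' then e else 0) + (\<Sum>j\<in>{j. snd j = s'}. Wf t s (j :: 'a nz \<times> 'a)))"
    by (rule det_block_rank) (rule surjI[where f="\<lambda>s. (undefined, s)"], simp)
  also have "(\<chi> s s'. (if s = s' then e else 0) + (\<Sum>j\<in>{j. snd j = s'}. Wf t s (j :: 'a nz \<times> 'a))) =
      (\<chi> (s::'a) s'. (if s = s' then e + t * int CARD('a) else 0) + (- t))"
  proof -
    have "(\<Sum>j\<in>{j. snd j = s'}. Wf t s (j :: 'a nz \<times> 'a)) = (if s = s' then t * int CARD('a) else 0) + (- t)" for s s' :: 'a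
    proof -
      have set: "{j. snd j = s'} = (\<lambda>c. (c, s')) ` (UNIV :: 'a nz set)" by auto
      have "(\<Sum>j\<in>{j. snd j = s'}. Wf t s (j :: 'a nz \<times> 'a)) = (\<Sum>c\<in>(UNIV :: 'a nz set). Wf t s (c, s'))"
        unfolding set by (subst sum.reindex) (auto simp: inj_on_def)
      also have "\<dots> = t * ((\<Sum>c\<in>(UNIV :: 'a nz set). (if s = s' then 1 else 0)) - (\<Sum>c\<in>(UNIV :: 'a nz set). (if s - s' = inverse (val c) then 1 else 0)))"
        by (simp add: Wf_def sum_distrib_left sum_subtractf right_diff_distrib)
      also have "\<dots> = t * ((if s = s' then int CARD('a nz) else 0) - (if s = s' then 0 else 1))"
        by (simp add: sum_inv_count)
      also have "\<dots> = (if s = s' then t * int CARD('a) else 0) + (- t)"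
      proof -
        have cq: "int CARD('a) = int CARD('a nz) + 1" using card_nz[where 'a='a] by simp
        show ?thesis unfolding cq by (simp add: algebra_simps)
      qed
      finally show ?thesis .
    qed
    then show ?thesis by (simp add: vec_eq_iff add.assoc)
  qed
  also have "det (\<chi> (s::'a) s'. (if s = s' then e + t * int CARD('a) else 0) + (- t)) =
      (e + t * int CARD('a)) ^ (CARD('a) - 1) * (e + t * int CARD('a) + int CARD('a) * (- t))"
    by (rule det_scalar_plus_J)
  also have "e + t * int CARD('a) + int CARD('a) * (- t) = e" by (simp add: algebra_simps)
  finally show ?thesis .
qed



lemma group_det_det:
  fixes a :: "'a::{field,finite} \<times> 'a \<Rightarrow> int"
  shows "group_det GA1 ga_mult ga_inv a = det (\<chi> i j. a (ga_mult (phi i) (ga_inv (phi j))))"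
  unfolding group_det_def using det_reindex[OF phi_bij, of "\<lambda>g h. a (ga_mult g (ga_inv h))"] by simp

lemma alg_cancel:
  fixes A B d s :: int and N q :: nat
  assumes s: "s = 1 \<or> s = -1" and q: "q \<ge> 1" "q \<le> N" and N: "even N" and A: "A \<noteq> 0"
    and eq: "(s * A) ^ N * d = A ^ q * ((s * A) ^ (N - q) * ((s * B) ^ (q - 1) * (s * A)))"
  shows "d = A * B ^ (q - 1)"
proof -
  have ex: "(N - q) + (q - 1) + 1 = N" using q by simp
  have "(s * A) ^ (N - q) * ((s * B) ^ (q - 1) * (s * A)) = s ^ ((N - q) + (q - 1) + 1) * (A ^ (N - q) * (B ^ (q - 1) * A))"
    by (simp only: power_mult_distrib power_add power_one_right ac_simps)
  also have "\<dots> = s ^ N * (A ^ (N - q) * (B ^ (q - 1) * A))" by (simp only: ex)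
  finally have r: "(s * A) ^ (N - q) * ((s * B) ^ (q - 1) * (s * A)) = s ^ N * (A ^ (N - q) * (B ^ (q - 1) * A))" .
  have sN: "s ^ N = 1" using s N by auto
  have AN: "A ^ q * A ^ (N - q) = A ^ N" using q by (simp add: power_add[symmetric])
  have "A ^ N * d = A ^ N * (A * B ^ (q - 1))"
  proof -
    have "A ^ N * d = (s * A) ^ N * d" by (simp add: power_mult_distrib sN)
    also have "\<dots> = A ^ q * (A ^ (N - q) * (B ^ (q - 1) * A))" using eq r sN by simp
    also have "\<dots> = A ^ N * (A * B ^ (q - 1))" using AN by (simp add: ac_simps)
    finally show ?thesis .
  qed
  then show ?thesis using A by simp
qed

lemma main_nonzero:
  fixes A B :: int
  assumes A0: "A \<noteq> 0"
    and cop: "coprime (nat \<bar>A\<bar>) (CARD('a::{field,finite} nz))"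
    and dv: "B = A + int CARD('a) * t0"
  shows "\<exists>a :: 'a \<times> 'a \<Rightarrow> int. group_det GA1 ga_mult ga_inv a = A * B ^ (CARD('a) - 1)"
proof -
  obtain y :: "'a nz \<Rightarrow> int" where y: "det (Ymat y) = A" "eps y = A \<or> eps y = - A"
    using exists_Y[OF A0 cop] by blast
  define s :: int where "s = (if eps y = A then 1 else -1)"
  have s: "s = 1 \<or> s = -1" by (simp add: s_def)
  have es: "eps y = s * A" using y(2) by (auto simp: s_def)
  define t where "t = s * t0"
  let ?q = "CARD('a)" and ?N = "CARD('a nz \<times> 'a)"
  define M where "M = (\<chi> i j. coef y t (ga_mult (phi i) (ga_inv (phi j))))"
  have M: "M = (\<chi> i j. Kmat y $ i $ j + Wf t (snd i) j)"
    by (simp add: M_def coef_entry Kmat_def)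
  have "det (Kmat y) * det (\<chi> (i::'a nz \<times> 'a) j. (if i = j then eps y else 0) + Wf t (snd i) j) = det (\<chi> i. eps y *s (M $ i))"
    using arg_cong[OF K_decomp[of y t], of det] by (simp add: det_mul M)
  also have "\<dots> = eps y ^ ?N * det M"
    using det_rows_mul[of "\<lambda>i. eps y" "\<lambda>i. M $ i"] by (simp add: vec_lambda_eta)
  finally have E: "det (Kmat y) * det (\<chi> (i::'a nz \<times> 'a) j. (if i = j then eps y else 0) + Wf t (snd i) j) = eps y ^ ?N * det M" .
  have K: "det (Kmat y) = A ^ ?q"
  proof -
    have "Kmat y = (\<chi> (i::'a nz \<times> 'a) j. if snd i = snd j then Ymat y $ fst i $ fst j else 0)"
      by (simp add: vec_eq_iff Kmat_def Ymat_def)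
    then show ?thesis using det_kron[of "Ymat y", where 'v='a] y(1) by simp
  qed
  have IW: "det (\<chi> (i::'a nz \<times> 'a) j. (if i = j then eps y else 0) + Wf t (snd i) j) =
     eps y ^ (?N - ?q) * ((eps y + t * int ?q) ^ (?q - 1) * eps y)"
    by (rule det_IW)
  have Bq: "s * A + t * int ?q = s * B"
    using s by (auto simp: es t_def dv algebra_simps)
  have q1: "?q \<ge> 1" by (simp add: Suc_leI)
  have cn: "CARD('a nz) \<ge> 1" by (simp add: Suc_leI)
  have Nq: "?N = CARD('a nz) * ?q" by (simp add: card_cartesian_product)
  have qN: "?q \<le> ?N" unfolding Nq using cn by simp
  have Ne: "even ?N"
  proof (cases "even ?q")
    case True
    then show ?thesis unfolding Nq by simp
  next
    case False
    then obtain m where m: "?q = 2 * m + 1" by (metis oddE)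
    have "CARD('a nz) = 2 * m" using card_nz[where 'a='a] m by simp
    then show ?thesis unfolding Nq by simp
  qed
  have "(s * A) ^ ?N * det M = A ^ ?q * ((s * A) ^ (?N - ?q) * ((s * B) ^ (?q - 1) * (s * A)))"
    using E K IW by (simp add: es Bq)
  then have "det M = A * B ^ (?q - 1)"
    by (rule alg_cancel[OF s q1 qN Ne A0])
  then show ?thesis using group_det_det[of "coef y t"] by (intro exI[of _ "coef y t"]) (simp add: M_def)
qed

theorem theorem2:
  fixes p k :: nat and A B :: int
  assumes "prime p" and "k \<ge> 1"
    and "card (UNIV :: 'a::{field,finite} set) = p ^ k"
    and "coprime A (int (p ^ k) - 1)"
    and "[B = A] (mod int (p ^ k))"
  shows "\<exists>a :: 'a \<times> 'a \<Rightarrow> int. group_det GA1 ga_mult ga_inv a = A * B ^ (p ^ k - 1)"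
proof (cases "A = 0")
  case True
  have ne: "(1, 0) \<in> (GA1 :: ('a \<times> 'a) set)" by (simp add: GA1_def)
  have fin: "finite (GA1 :: ('a \<times> 'a) set)" by simp
  have "group_det GA1 ga_mult ga_inv (\<lambda>_::'a \<times> 'a. 0::int) = 0"
  proof -
    have "card (GA1 :: ('a \<times> 'a) set) \<noteq> 0" using card_0_eq[OF fin] ne by blast
    note c = this
    have z: "(0::int) ^ card (GA1 :: ('a \<times> 'a) set) = 0" by (simp only: power_0_left c if_False)
    show ?thesis unfolding group_det_def by (simp add: z)
  qed
  then show ?thesis using True by (intro exI[of _ "\<lambda>_. 0"]) simp
next
  case False
  have q: "CARD('a) = p ^ k" using assms(3) .
  have cn: "int CARD('a nz) = int (p ^ k) - 1"
  proof -
    have "p ^ k \<ge> 1" using assms(1) by (simp add: prime_gt_0_nat Suc_leI)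
    then show ?thesis using card_nz[where 'a='a] q by (simp add: of_nat_diff)
  qed
  have cop: "coprime (nat \<bar>A\<bar>) (CARD('a nz))"
    using assms(4) by (simp add: cn)
  have "int (p ^ k) dvd B - A" using assms(5) by (simp add: cong_iff_dvd_diff)
  then obtain t0 where t0: "B - A = int (p ^ k) * t0" by blast
  have dv: "B = A + int CARD('a) * t0" using t0 q by simp
  show ?thesis using main_nonzero[OF False cop dv] q by simp
qed

end
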